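(* Let $G$, $m$ and $\mathrm{Stone}(G,m)$ be as below, let $i$ be a non-source vertex of $G$ with predecessors $i'$ and $i''$, let $1\le j\le m$, and let $F=\{\overline r_{j_1},\dots,\overline r_{j_\ell}\}$ be a set of negated $r$-literals with $\overline r_j\notin F$. Then there is a regular tree-like resolution derivation of the clause $F\lor\overline p_{i,j}\lor r_j$ from the clauses of $\mathrm{Stone}(G,m)$ together with the clauses $\overline p_{i',k}\lor r_k$ and $\overline p_{i'',k}\lor r_k$ for $1\le k\le m$, which has size $O(m^2)$ and whose resolution variables are only among the variables $r_k$ with $k\notin\{j,j_1,\dots,j_\ell\}$ and the variables $p_{i',k}$ and $p_{i'',k}$ for $1\le k\le m$.
   Context: Let $G=(V,E)$ be a directed acyclic graph with vertex set $V=\{1,\dots,N\}$, single sink $1$, each non-source vertex of in-degree exactly $2$, edges $(i',i)$ satisfying $i'>i$, sources exactly $n+1,\dots,N$; let $m\ge N$. $\mathrm{Stone}(G,m)$ consists of: $\bigvee_{j=1}^m p_{i,j}$ for each vertex $i$; $\overline p_{i,j}\lor r_j$ for each source $i$ and each $j$; $\overline p_{1,j}\lor\overline r_j$ for each $j$; and $\overline p_{i',j'}\lor\overline r_{j'}\lor\overline p_{i'',j''}\lor\overline r_{j''}\lor\overline p_{i,j}\lor r_j$ whenever $i',i''$ are the two predecessors of $i$ and $j\notin\{j',j''\}$. A resolution inference derives $(A\setminus\{x\})\cup(B\setminus\{\overline x\})$ from $A\ni x$ and $B\ni\overline x$. A derivation is tree-like if its underlying dag is a tree, and a derivation of a clause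 $C$ is regular if no variable is used as a resolution variable more than once along any path and no variable occurring in $C$ is used as a resolution variable. Size = number of clauses; the $O(\cdot)$ constant is absolute. *)

theory Defs
  imports Complex_Main
begin

text \<open>Graphs: vertices 1..N, edge set E of pairs (i', i) meaning an edge from i' to i.\<close>

definition preds :: "(nat \<times> nat) set \<Rightarrow> nat \<Rightarrow> nat set" where
  "preds E i = {i'. (i', i) \<in> E}"

definition succs :: "(nat \<times> nat) set \<Rightarrow> nat \<Rightarrow> nat set" where
  "succs E i = {i''. (i, i'') \<in> E}"

definition stone_graph :: "nat \<Rightarrow> nat \<Rightarrow> (nat \<times> nat) set \<Rightarrow> bool" where
  "stone_graph N n E \<longleftrightarrow>
     1 \<le> N \<and>
     E \<subseteq> {1..N} \<times> {1..N} \<and>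
     (\<forall>(a, b) \<in> E. a > b) \<and>
     {v \<in> {1..N}. succs E v = {}} = {1} \<and>
     {v \<in> {1..N}. preds E v = {}} = {n+1..N} \<and>
     (\<forall>v \<in> {1..N}. preds E v \<noteq> {} \<longrightarrow> card (preds E v) = 2)"

datatype var = P nat nat | R nat

datatype lit = Pos var | Neg var

type_synonym clause = "lit set"

definition stone :: "nat \<Rightarrow> (nat \<times> nat) set \<Rightarrow> nat \<Rightarrow> clause set" where
  "stone N E m =
     {{Pos (P i j) | j. j \<in> {1..m}} | i. i \<in> {1..N}}
   \<union> {{Neg (P i j), Pos (R j)} | i j. i \<in> {1..N} \<and> preds E i = {} \<and> j \<in> {1..m}}
   \<union> {{Neg (P 1 j), Neg (R j)} | j. j \<in> {1..m}}
   \<union> {{Neg (P i' j'), Neg (R j'), Neg (P i'' j''), Neg (R j''), Neg (P i j), Pos (R j)}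
       | i i' i'' j j' j''. i \<in> {1..N} \<and> preds E i = {i', i''} \<and> i' \<noteq> i''
          \<and> j \<in> {1..m} \<and> j' \<in> {1..m} \<and> j'' \<in> {1..m} \<and> j \<notin> {j', j''}}"

datatype deriv = Ax clause | Res var deriv deriv

fun concl :: "deriv \<Rightarrow> clause" where
  "concl (Ax C) = C"
| "concl (Res x d1 d2) = (concl d1 - {Pos x}) \<union> (concl d2 - {Neg x})"

fun valid_deriv :: "clause set \<Rightarrow> deriv \<Rightarrow> bool" where
  "valid_deriv S (Ax C) \<longleftrightarrow> C \<in> S"
| "valid_deriv S (Res x d1 d2) \<longleftrightarrow> valid_deriv S d1 \<and> valid_deriv S d2
      \<and> Pos x \<in> concl d1 \<and> Neg x \<in> concl d2"

fun deriv_size :: "deriv \<Rightarrow> nat" where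
  "deriv_size (Ax C) = 1"
| "deriv_size (Res x d1 d2) = 1 + deriv_size d1 + deriv_size d2"

fun resvars :: "deriv \<Rightarrow> var set" where
  "resvars (Ax C) = {}"
| "resvars (Res x d1 d2) = insert x (resvars d1 \<union> resvars d2)"

fun path_regular :: "deriv \<Rightarrow> bool" where
  "path_regular (Ax C) \<longleftrightarrow> True"
| "path_regular (Res x d1 d2) \<longleftrightarrow> x \<notin> resvars d1 \<and> x \<notin> resvars d2
      \<and> path_regular d1 \<and> path_regular d2"

definition vars_of :: "clause \<Rightarrow> var set" where
  "vars_of C = {x. Pos x \<in> C \<or> Neg x \<in> C}"

definition regular_deriv :: "deriv \<Rightarrow> bool" where
  "regular_deriv d \<longleftrightarrow> path_regular d \<and> resvars d \<inter> vars_of (concl d) = {}"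

end

theory Submission
  imports Defs
begin


fun chain :: "nat \<Rightarrow> (nat \<Rightarrow> deriv) \<Rightarrow> nat list \<Rightarrow> deriv \<Rightarrow> deriv" where
  "chain a D [] acc = acc"
| "chain a D (k#ks) acc = chain a D ks (Res (P a k) acc (D k))"

lemma chain_valid:
  assumes "distinct ks" "\<forall>k\<in>set ks. Pos (P a k) \<in> concl acc"
    "\<forall>k\<in>set ks. \<forall>k'. Pos (P a k') \<notin> concl (D k)"
    "\<forall>k\<in>set ks. Neg (P a k) \<in> concl (D k)"
    "valid_deriv S acc" "\<forall>k\<in>set ks. valid_deriv S (D k)"
  shows "valid_deriv S (chain a D ks acc) \<and>
    concl (chain a D ks acc) = (concl acc - {Pos (P a k)|k. k\<in>set ks}) \<union> (\<Union>k\<in>set ks. concl (D k) - {Neg (P a k)})"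
  using assms
proof (induction ks arbitrary: acc)
  case Nil then show ?case by simp
next
  case (Cons k ks)
  let ?acc = "Res (P a k) acc (D k)"
  have IH: "valid_deriv S (chain a D ks ?acc) \<and>
    concl (chain a D ks ?acc) = (concl ?acc - {Pos (P a k)|k. k\<in>set ks}) \<union> (\<Union>k\<in>set ks. concl (D k) - {Neg (P a k)})"
    apply (rule Cons.IH) using Cons.prems by auto
  show ?case using IH Cons.prems by auto
qed

lemma chain_resvars:
  "resvars (chain a D ks acc) = resvars acc \<union> (\<Union>k\<in>set ks. insert (P a k) (resvars (D k)))"
  by (induction ks arbitrary: acc) auto

lemma chain_regular:
  assumes "distinct ks" "path_regular acc" "\<forall>k\<in>set ks. path_regular (D k)"
    "\<forall>k\<in>set ks. P a k \<notin> resvars acc" "\<forall>k\<in>set ks. \<forall>k'\<in>set ks. P a k' \<notin> resvars (D k)"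
  shows "path_regular (chain a D ks acc)"
  using assms
proof (induction ks arbitrary: acc)
  case Nil then show ?case by simp
next
  case (Cons k ks)
  show ?case unfolding chain.simps
    apply (rule Cons.IH) using Cons.prems by auto
qed

lemma chain_size:
  assumes "\<forall>k\<in>set ks. deriv_size (D k) \<le> s"
  shows "deriv_size (chain a D ks acc) \<le> deriv_size acc + length ks * (s+1)"
  using assms
proof (induction ks arbitrary: acc)
  case Nil then show ?case by simp
next
  case (Cons k ks)
  have "deriv_size (chain a D ks (Res (P a k) acc (D k))) \<le> deriv_size (Res (P a k) acc (D k)) + length ks * (s+1)"
    using Cons.IH[of "Res (P a k) acc (D k)"] Cons.prems by simp
  then show ?case using Cons.prems by simp
qed


definition leaf :: "nat\<Rightarrow>nat\<Rightarrow>nat\<Rightarrow>nat\<Rightarrow>clause\<Rightarrow>nat\<Rightarrow>nat\<Rightarrow>deriv" where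
"leaf i i' i'' j F k1 k2 = (let B = Ax {Neg (P i' k1), Neg (R k1), Neg (P i'' k2), Neg (R k2), Neg (P i j), Pos (R j)};
   B1 = (if Neg (R k1) \<in> F then B else Res (R k1) (Ax {Neg (P i' k1), Pos (R k1)}) B)
   in if Neg (R k2) \<in> F \<or> k2 = k1 then B1 else Res (R k2) (Ax {Neg (P i'' k2), Pos (R k2)}) B1)"

definition Dj where
"Dj i i' i'' j F k1 k2 = (if k2 = j then Ax {Neg (P i'' j), Pos (R j)} else leaf i i' i'' j F k1 k2)"

definition Ek where
"Ek i i' i'' j F m k1 = (if k1 = j then Ax {Neg (P i' j), Pos (R j)}
   else chain i'' (Dj i i' i'' j F k1) [1..<m+1] (Ax {Pos (P i'' k)|k. k\<in>{1..m}}))"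

definition whole where
"whole i i' i'' j F m = chain i' (Ek i i' i'' j F m) [1..<m+1] (Ax {Pos (P i' k)|k. k\<in>{1..m}})"

context
  fixes N n E m i i' i'' j F
  assumes G: "stone_graph N n E" and mN: "m \<ge> N" and iN: "i \<in> {1..N}"
    and pr: "preds E i = {i', i''}" and ne: "i' \<noteq> i''" and j1: "1 \<le> j" and jm: "j \<le> m"
    and FF: "F \<subseteq> {Neg (R k) | k. k \<in> {1..m}}" and nF: "Neg (R j) \<notin> F"
begin

definition "SS = stone N E m \<union> {{Neg (P i' k), Pos (R k)} | k. k \<in> {1..m}}
                              \<union> {{Neg (P i'' k), Pos (R k)} | k. k \<in> {1..m}}"

lemma facts: "i' \<in> {1..N}" "i'' \<in> {1..N}" "i < i'" "i < i''" "2 \<le> m"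
proof -
  have E: "(i', i) \<in> E" "(i'', i) \<in> E" using pr unfolding preds_def by auto
  from G have sub: "E \<subseteq> {1..N} \<times> {1..N}" and gt: "\<forall>(a, b) \<in> E. a > b"
    unfolding stone_graph_def by auto
  show "i' \<in> {1..N}" "i'' \<in> {1..N}" using E sub by auto
  show "i < i'" "i < i''" using E gt by auto
  show "2 \<le> m" using \<open>i' \<in> {1..N}\<close> \<open>i'' \<in> {1..N}\<close> ne mN by auto
qed

lemma axA: "k \<in> {1..m} \<Longrightarrow> {Neg (P i' k), Pos (R k)} \<in> SS"
  unfolding SS_def by (rule UnI1, rule UnI2) blast
lemma axB: "k \<in> {1..m} \<Longrightarrow> {Neg (P i'' k), Pos (R k)} \<in> SS"
  unfolding SS_def by (rule UnI2) blast

lemma axC: "k1 \<in> {1..m} \<Longrightarrow> k1 \<noteq> j \<Longrightarrow> k2 \<in> {1..m} \<Longrightarrow> k2 \<noteq> j \<Longrightarrow>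
  {Neg (P i' k1), Neg (R k1), Neg (P i'' k2), Neg (R k2), Neg (P i j), Pos (R j)} \<in> SS"
  unfolding SS_def stone_def
  apply (rule UnI1, rule UnI1, rule UnI2, rule CollectI)
  apply (rule exI[of _ i], rule exI[of _ i'], rule exI[of _ i''], rule exI[of _ j], rule exI[of _ k1], rule exI[of _ k2])
  using iN pr ne j1 jm by simp

lemma leaf_props:
  assumes k1: "k1 \<in> {1..m}" "k1 \<noteq> j" and k2: "k2 \<in> {1..m}" "k2 \<noteq> j"
  shows "valid_deriv SS (leaf i i' i'' j F k1 k2)"
    "concl (leaf i i' i'' j F k1 k2) = {Neg (P i' k1), Neg (P i'' k2), Neg (P i j), Pos (R j)} \<union> ({Neg (R k1), Neg (R k2)} \<inter> F)"
    "path_regular (leaf i i' i'' j F k1 k2)"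
    "resvars (leaf i i' i'' j F k1 k2) \<subseteq> {R k | k. k\<in>{k1,k2} \<and> Neg (R k) \<notin> F}"
    "deriv_size (leaf i i' i'' j F k1 k2) \<le> 5"
proof -
  have B: "{Neg (P i' k1), Neg (R k1), Neg (P i'' k2), Neg (R k2), Neg (P i j), Pos (R j)} \<in> SS"
    by (rule axC[OF k1 k2])
  have A1: "{Neg (P i' k1), Pos (R k1)} \<in> SS" by (rule axA[OF k1(1)])
  have A2: "{Neg (P i'' k2), Pos (R k2)} \<in> SS" by (rule axB[OF k2(1)])
  show "valid_deriv SS (leaf i i' i'' j F k1 k2)"
    unfolding leaf_def Let_def using B A1 A2 k1 k2 ne by auto
  show "concl (leaf i i' i'' j F k1 k2) = {Neg (P i' k1), Neg (P i'' k2), Neg (P i j), Pos (R j)} \<union> ({Neg (R k1), Neg (R k2)} \<inter> F)"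
    unfolding leaf_def Let_def using k1 k2 ne by auto
  show "path_regular (leaf i i' i'' j F k1 k2)"
    unfolding leaf_def Let_def by auto
  show "resvars (leaf i i' i'' j F k1 k2) \<subseteq> {R k | k. k\<in>{k1,k2} \<and> Neg (R k) \<notin> F}"
    unfolding leaf_def Let_def by auto
  show "deriv_size (leaf i i' i'' j F k1 k2) \<le> 5"
    unfolding leaf_def Let_def by auto
qed

lemma acc1: "{Pos (P i' k)|k. k\<in>{1..m}} \<in> SS" and acc2: "{Pos (P i'' k)|k. k\<in>{1..m}} \<in> SS"
proof -
  note f = facts
  have "{Pos (P i' k)|k. k\<in>{1..m}} \<in> {{Pos (P i j) | j. j \<in> {1..m}} | i. i \<in> {1..N}}" using f by blast
  note h = this
  show "{Pos (P i' k)|k. k\<in>{1..m}} \<in> SS" unfolding SS_def stone_def by (intro UnI1) (rule h)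
  have "{Pos (P i'' k)|k. k\<in>{1..m}} \<in> {{Pos (P i j) | j. j \<in> {1..m}} | i. i \<in> {1..N}}" using f by blast
  note h = this
  show "{Pos (P i'' k)|k. k\<in>{1..m}} \<in> SS" unfolding SS_def stone_def by (intro UnI1) (rule h)
qed

abbreviation "Rset \<equiv> {R k | k. k \<in> {1..m} \<and> k \<noteq> j \<and> Neg (R k) \<notin> F}"

lemma Dj_all:
  assumes k1: "k1 \<in> {1..m}" "k1 \<noteq> j" and k2: "k2 \<in> {1..m}"
  shows "(valid_deriv SS (Dj i i' i'' j F k1 k2)) \<and>
    (concl (Dj i i' i'' j F k1 k2) - {Neg (P i'' k2)} = (if k2 = j then {Pos (R j)} else
        {Neg (P i' k1), Neg (P i j), Pos (R j)} \<union> ({Neg (R k1), Neg (R k2)} \<inter> F))) \<and>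
    (Neg (P i'' k2) \<in> concl (Dj i i' i'' j F k1 k2)) \<and>
    (\<forall>k'. Pos (P i'' k') \<notin> concl (Dj i i' i'' j F k1 k2)) \<and>
    (path_regular (Dj i i' i'' j F k1 k2)) \<and>
    (resvars (Dj i i' i'' j F k1 k2) \<subseteq> Rset) \<and>
    (deriv_size (Dj i i' i'' j F k1 k2) \<le> 5)"
proof (cases "k2 = j")
  case True
  have "{Neg (P i'' j), Pos (R j)} \<in> SS" using j1 jm by (intro axB) simp
  then show ?thesis
    unfolding Dj_def using True by auto
next
  case False
  note f = facts
  have D: "Dj i i' i'' j F k1 k2 = leaf i i' i'' j F k1 k2" unfolding Dj_def using False by simp
  note L = leaf_props[OF k1 k2(1) False]
  have nFP: "\<And>x. x \<in> F \<Longrightarrow> \<exists>k. x = Neg (R k)" using FF by blast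
  have "valid_deriv SS (Dj i i' i'' j F k1 k2)" unfolding D by (rule L(1))
  have a: "Neg (P i' k1) \<noteq> Neg (P i'' k2)" "Neg (P i j) \<noteq> Neg (P i'' k2)" using ne f by auto
  have b: "Neg (P i'' k2) \<notin> F" using nFP by blast
  have "concl (Dj i i' i'' j F k1 k2) - {Neg (P i'' k2)} = (if k2 = j then {Pos (R j)} else
        {Neg (P i' k1), Neg (P i j), Pos (R j)} \<union> ({Neg (R k1), Neg (R k2)} \<inter> F))"
    unfolding D L(2) using False a b by auto
  have "Neg (P i'' k2) \<in> concl (Dj i i' i'' j F k1 k2)" unfolding D L(2) by simp
  have "\<forall>k'. Pos (P i'' k') \<notin> concl (Dj i i' i'' j F k1 k2)" unfolding D L(2) using nFP by blast
  have "path_regular (Dj i i' i'' j F k1 k2)" unfolding D by (rule L(3))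
  have "resvars (Dj i i' i'' j F k1 k2) \<subseteq> Rset" unfolding D using L(4) k1 k2 False by blast
  have "deriv_size (Dj i i' i'' j F k1 k2) \<le> 5" unfolding D by (rule L(5))
  show ?thesis by (intro conjI; fact)
qed


lemma Dj_props:
  assumes k1: "k1 \<in> {1..m}" "k1 \<noteq> j" and k2: "k2 \<in> {1..m}"
  shows "valid_deriv SS (Dj i i' i'' j F k1 k2)"
    "concl (Dj i i' i'' j F k1 k2) - {Neg (P i'' k2)} = (if k2 = j then {Pos (R j)} else
        {Neg (P i' k1), Neg (P i j), Pos (R j)} \<union> ({Neg (R k1), Neg (R k2)} \<inter> F))"
    "Neg (P i'' k2) \<in> concl (Dj i i' i'' j F k1 k2)"
    "\<forall>k'. Pos (P i'' k') \<notin> concl (Dj i i' i'' j F k1 k2)"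
    "path_regular (Dj i i' i'' j F k1 k2)"
    "resvars (Dj i i' i'' j F k1 k2) \<subseteq> Rset"
    "deriv_size (Dj i i' i'' j F k1 k2) \<le> 5"
  using Dj_all[OF assms] by blast+

lemma k0_ex: "\<exists>k0. k0 \<in> {1..m} \<and> k0 \<noteq> j"
proof
  show "(if j = 1 then 2 else 1) \<in> {1..m} \<and> (if j = 1 then 2 else 1) \<noteq> j" using facts(5) j1 jm by auto
qed

lemma Ek_props:
  assumes k1: "k1 \<in> {1..m}"
  shows "valid_deriv SS (Ek i i' i'' j F m k1)
    \<and> concl (Ek i i' i'' j F m k1) = (if k1 = j then {Neg (P i' j), Pos (R j)} else
         {Neg (P i' k1), Neg (P i j), Pos (R j)} \<union> F)
    \<and> path_regular (Ek i i' i'' j F m k1)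
    \<and> resvars (Ek i i' i'' j F m k1) \<subseteq> Rset \<union> {P i'' k | k. k \<in> {1..m}}
    \<and> deriv_size (Ek i i' i'' j F m k1) \<le> 6*m+1"
proof (cases "k1 = j")
  case True
  have "{Neg (P i' j), Pos (R j)} \<in> SS" using j1 jm by (intro axA) simp
  then show ?thesis unfolding Ek_def using True by auto
next
  case False
  note f = facts
  let ?D = "Dj i i' i'' j F k1"
  let ?acc = "Ax {Pos (P i'' k)|k. k\<in>{1..m}}"
  have st: "set [1..<m+1] = {1..m}" by auto
  have vc: "valid_deriv SS (chain i'' ?D [1..<m+1] ?acc) \<and>
    concl (chain i'' ?D [1..<m+1] ?acc) = (concl ?acc - {Pos (P i'' k)|k. k\<in>set [1..<m+1]}) \<union> (\<Union>k\<in>set [1..<m+1]. concl (?D k) - {Neg (P i'' k)})"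
    apply (rule chain_valid)
         apply simp
        apply (auto simp: st)[1]
       apply (unfold st, intro ballI, rule Dj_props(4)[OF k1 False], simp)
      apply (intro ballI, rule Dj_props(3)[OF k1 False], simp)
     apply (simp only: valid_deriv.simps, rule acc2)
    apply (intro ballI, rule Dj_props(1)[OF k1 False], simp)
    done
  have U: "(\<Union>k\<in>{1..m}. concl (?D k) - {Neg (P i'' k)}) = {Neg (P i' k1), Neg (P i j), Pos (R j)} \<union> F"
  proof
    show "(\<Union>k\<in>{1..m}. concl (?D k) - {Neg (P i'' k)}) \<subseteq> {Neg (P i' k1), Neg (P i j), Pos (R j)} \<union> F"
      using Dj_props(2)[OF k1 False] by auto
  next
    obtain k0 where k0: "k0 \<in> {1..m}" "k0 \<noteq> j" using k0_ex by blast
    have a: "{Neg (P i' k1), Neg (P i j), Pos (R j)} \<subseteq> concl (?D k0) - {Neg (P i'' k0)}"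
      using Dj_props(2)[OF k1 False k0(1)] k0 by auto
    have b: "x \<in> concl (?D k) - {Neg (P i'' k)}" if "x \<in> F" "x = Neg (R k)" "k \<in> {1..m}" for x k
    proof -
      have "k \<noteq> j" using that nF by auto
      then show ?thesis using Dj_props(2)[OF k1 False that(3)] that by auto
    qed
    show "{Neg (P i' k1), Neg (P i j), Pos (R j)} \<union> F \<subseteq> (\<Union>k\<in>{1..m}. concl (?D k) - {Neg (P i'' k)})"
    proof
      fix x assume "x \<in> {Neg (P i' k1), Neg (P i j), Pos (R j)} \<union> F"
      then show "x \<in> (\<Union>k\<in>{1..m}. concl (?D k) - {Neg (P i'' k)})"
      proof
        assume "x \<in> {Neg (P i' k1), Neg (P i j), Pos (R j)}"
        then show ?thesis using a k0 by blast
      next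
        assume "x \<in> F"
        then obtain k where "x = Neg (R k)" "k \<in> {1..m}" using FF by blast
        then show ?thesis using b \<open>x \<in> F\<close> by blast
      qed
    qed
  qed
  have reg: "path_regular (chain i'' ?D [1..<m+1] ?acc)"
    apply (rule chain_regular)
        apply simp
       apply simp
      apply (unfold st, intro ballI, rule Dj_props(5)[OF k1 False], simp)
     apply simp
    apply (intro ballI)
    subgoal for k k' using Dj_props(6)[OF k1 False, of k] by blast
    done
  have rv: "resvars (chain i'' ?D [1..<m+1] ?acc) \<subseteq> Rset \<union> {P i'' k | k. k \<in> {1..m}}"
    unfolding chain_resvars st using Dj_props(6)[OF k1 False] by fastforce
  have sz: "deriv_size (chain i'' ?D [1..<m+1] ?acc) \<le> deriv_size ?acc + length [1..<m+1] * (5+1)"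
    apply (rule chain_size) using Dj_props(7)[OF k1 False] unfolding st by auto
  show ?thesis using vc U reg rv sz False unfolding Ek_def st by auto
qed

lemma nFP: "x \<in> F \<Longrightarrow> \<exists>k. x = Neg (R k)" using FF by blast

lemma nPos: "k \<in> {1..m} \<Longrightarrow> Pos (P i' k') \<notin> concl (Ek i i' i'' j F m k)"
proof -
  assume k: "k \<in> {1..m}"
  have "Pos (P i' k') \<notin> F" using nFP by blast
  then show ?thesis using conjunct1[OF conjunct2[OF Ek_props[OF k]]] by simp
qed
lemma nNeg: "k \<in> {1..m} \<Longrightarrow> Neg (P i' k) \<in> concl (Ek i i' i'' j F m k)"
proof -
  assume k: "k \<in> {1..m}"
  then show ?thesis using conjunct1[OF conjunct2[OF Ek_props[OF k]]] by simp
qed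

lemma whole_props:
  "valid_deriv SS (whole i i' i'' j F m)
   \<and> concl (whole i i' i'' j F m) = F \<union> {Neg (P i j), Pos (R j)}
   \<and> regular_deriv (whole i i' i'' j F m)
   \<and> resvars (whole i i' i'' j F m) \<subseteq> Rset \<union> {P i' k | k. k \<in> {1..m}} \<union> {P i'' k | k. k \<in> {1..m}}
   \<and> real (deriv_size (whole i i' i'' j F m)) \<le> 9 * real m ^ 2"
proof -
  note f = facts
  let ?D = "Ek i i' i'' j F m"
  let ?acc = "Ax {Pos (P i' k)|k. k\<in>{1..m}}"
  have st: "set [1..<m+1] = {1..m}" by auto
  have vc: "valid_deriv SS (chain i' ?D [1..<m+1] ?acc) \<and>
    concl (chain i' ?D [1..<m+1] ?acc) = (concl ?acc - {Pos (P i' k)|k. k\<in>set [1..<m+1]}) \<union> (\<Union>k\<in>set [1..<m+1]. concl (?D k) - {Neg (P i' k)})"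
    apply (rule chain_valid)
         apply simp
        apply (auto simp: st)[1]
       apply (unfold st, intro ballI allI, rule nPos, simp)
      apply (intro ballI, rule nNeg, simp)
     apply (simp only: valid_deriv.simps, rule acc1)
    apply (intro ballI, rule conjunct1[OF Ek_props], simp)
    done
  have cE: "concl (?D k) - {Neg (P i' k)} = (if k = j then {Pos (R j)} else {Neg (P i j), Pos (R j)} \<union> F)"
    if "k \<in> {1..m}" for k
  proof -
    have e: "concl (?D k) = (if k = j then {Neg (P i' j), Pos (R j)} else
         {Neg (P i' k), Neg (P i j), Pos (R j)} \<union> F)" using Ek_props[OF that] by blast
    have b: "Neg (P i' k) \<notin> F" using nFP by blast
    have c: "Neg (P i' k) \<noteq> Neg (P i j)" using f(3) by simp
    show ?thesis unfolding e using b c by auto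
  qed
  obtain k0 where k0: "k0 \<in> {1..m}" "k0 \<noteq> j" using k0_ex by blast
  have U: "(\<Union>k\<in>{1..m}. concl (?D k) - {Neg (P i' k)}) = F \<union> {Neg (P i j), Pos (R j)}"
  proof
    show "(\<Union>k\<in>{1..m}. concl (?D k) - {Neg (P i' k)}) \<subseteq> F \<union> {Neg (P i j), Pos (R j)}"
      using cE by auto
    show "F \<union> {Neg (P i j), Pos (R j)} \<subseteq> (\<Union>k\<in>{1..m}. concl (?D k) - {Neg (P i' k)})"
      using cE[OF k0(1)] k0 by auto
  qed
  have reg: "path_regular (chain i' ?D [1..<m+1] ?acc)"
    apply (rule chain_regular)
        apply simp
       apply simp
      apply (unfold st, intro ballI, rule conjunct1[OF conjunct2[OF conjunct2[OF Ek_props]]], simp)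
     apply simp
    apply (intro ballI)
    subgoal for k k' using conjunct1[OF conjunct2[OF conjunct2[OF conjunct2[OF Ek_props[of k]]]]] ne by blast
    done
  have rv: "resvars (chain i' ?D [1..<m+1] ?acc) \<subseteq> Rset \<union> {P i' k | k. k \<in> {1..m}} \<union> {P i'' k | k. k \<in> {1..m}}"
    unfolding chain_resvars st
  proof (intro Un_least UN_least)
    show "resvars ?acc \<subseteq> Rset \<union> {P i' k | k. k \<in> {1..m}} \<union> {P i'' k | k. k \<in> {1..m}}" by simp
    fix k assume k: "k \<in> {1..m}"
    have "resvars (?D k) \<subseteq> Rset \<union> {P i'' k | k. k \<in> {1..m}}" using Ek_props[OF k] by blast
    then show "insert (P i' k) (resvars (?D k)) \<subseteq> Rset \<union> {P i' k | k. k \<in> {1..m}} \<union> {P i'' k | k. k \<in> {1..m}}"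
      using k by blast
  qed
  have sz: "deriv_size (chain i' ?D [1..<m+1] ?acc) \<le> deriv_size ?acc + length [1..<m+1] * ((6*m+1)+1)"
    apply (rule chain_size) unfolding st
    apply (intro ballI) subgoal for k using Ek_props[of k] by blast
    done
  have cc: "concl (chain i' ?D [1..<m+1] ?acc) = F \<union> {Neg (P i j), Pos (R j)}"
    using vc U unfolding st by auto
  have disj: "resvars (chain i' ?D [1..<m+1] ?acc) \<inter> vars_of (F \<union> {Neg (P i j), Pos (R j)}) = {}"
  proof -
    have "vars_of (F \<union> {Neg (P i j), Pos (R j)}) \<subseteq> {R k | k. Neg (R k) \<in> F} \<union> {P i j, R j}"
      unfolding vars_of_def by (auto dest: nFP)
    moreover have "P i j \<notin> resvars (chain i' ?D [1..<m+1] ?acc)" using rv f(3,4) less_irrefl[of i] by blast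
    moreover have "R j \<notin> resvars (chain i' ?D [1..<m+1] ?acc)" using rv by blast
    moreover have "R k \<notin> resvars (chain i' ?D [1..<m+1] ?acc)" if "Neg (R k) \<in> F" for k using rv that by blast
    ultimately show ?thesis by blast
  qed
  have L: "length [1..<m+1] = m" by (simp only: length_upt)
  have "deriv_size (chain i' ?D [1..<m+1] ?acc) \<le> 1 + m * ((6*m+1)+1)" using sz unfolding L by simp
  also have "\<dots> \<le> 9 * m^2"
  proof -
    have q: "2*m \<le> m*m" using f(5) mult_le_mono1[of 2 m m] by simp
    have e1: "1 + m*((6*m+1)+1) = 1 + 2*m + 6*(m*m)" by (simp add: algebra_simps)
    have e2: "9*m^2 = 9*(m*m)" by (simp add: power2_eq_square)
    show ?thesis unfolding e1 e2 using q f(5) by linarith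
  qed
  finally have sz1: "deriv_size (chain i' ?D [1..<m+1] ?acc) \<le> 9 * m^2" .
  have sz2: "real (deriv_size (chain i' ?D [1..<m+1] ?acc)) \<le> 9 * real m ^ 2"
  proof -
    have "real (deriv_size (chain i' ?D [1..<m+1] ?acc)) \<le> real (9 * m^2)" using sz1 by (rule of_nat_mono)
    then show ?thesis by simp
  qed
  have v: "valid_deriv SS (chain i' ?D [1..<m+1] ?acc)" using vc by (rule conjunct1)
  have rd: "regular_deriv (chain i' ?D [1..<m+1] ?acc)" unfolding regular_deriv_def cc using reg disj by (rule conjI)
  show ?thesis unfolding whole_def using v cc rd rv sz2 by (intro conjI)
qed

end

theorem theorem2p3:
  "\<exists>c::real. \<forall>N n E m i i' i'' j F.
     stone_graph N n E \<and> m \<ge> N \<and> i \<in> {1..N} \<and> preds E i = {i', i''} \<and> i' \<noteq> i''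
     \<and> 1 \<le> j \<and> j \<le> m
     \<and> F \<subseteq> {Neg (R k) | k. k \<in> {1..m}} \<and> Neg (R j) \<notin> F
     \<longrightarrow> (\<exists>d. valid_deriv
                 (stone N E m \<union> {{Neg (P i' k), Pos (R k)} | k. k \<in> {1..m}}
                              \<union> {{Neg (P i'' k), Pos (R k)} | k. k \<in> {1..m}}) d
              \<and> concl d = F \<union> {Neg (P i j), Pos (R j)}
              \<and> regular_deriv d
              \<and> resvars d \<subseteq> {R k | k. k \<in> {1..m} \<and> k \<noteq> j \<and> Neg (R k) \<notin> F}
                              \<union> {P i' k | k. k \<in> {1..m}} \<union> {P i'' k | k. k \<in> {1..m}}
              \<and> real (deriv_size d) \<le> c * real m ^ 2)"
proof (intro exI[of _ 9] allI impI)
  fix N n E m i i' i'' j F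
  assume H: "stone_graph N n E \<and> m \<ge> N \<and> i \<in> {1..N} \<and> preds E i = {i', i''} \<and> i' \<noteq> i''
     \<and> 1 \<le> j \<and> j \<le> m
     \<and> F \<subseteq> {Neg (R k) | k. k \<in> {1..m}} \<and> Neg (R j) \<notin> F"
  then have W: "valid_deriv (SS N E m i' i'') (whole i i' i'' j F m)
   \<and> concl (whole i i' i'' j F m) = F \<union> {Neg (P i j), Pos (R j)}
   \<and> regular_deriv (whole i i' i'' j F m)
   \<and> resvars (whole i i' i'' j F m) \<subseteq> {R k | k. k \<in> {1..m} \<and> k \<noteq> j \<and> Neg (R k) \<notin> F} \<union> {P i' k | k. k \<in> {1..m}} \<union> {P i'' k | k. k \<in> {1..m}}
   \<and> real (deriv_size (whole i i' i'' j F m)) \<le> 9 * real m ^ 2"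
    by (intro whole_props) blast+
  have SSeq: "SS N E m i' i'' = stone N E m \<union> {{Neg (P i' k), Pos (R k)} | k. k \<in> {1..m}}
                              \<union> {{Neg (P i'' k), Pos (R k)} | k. k \<in> {1..m}}"
    using H by (intro SS_def[where n=n and i=i and j=j and F=F]) blast+
  show "\<exists>d. valid_deriv
                 (stone N E m \<union> {{Neg (P i' k), Pos (R k)} | k. k \<in> {1..m}}
                              \<union> {{Neg (P i'' k), Pos (R k)} | k. k \<in> {1..m}}) d
              \<and> concl d = F \<union> {Neg (P i j), Pos (R j)}
              \<and> regular_deriv d
              \<and> resvars d \<subseteq> {R k | k. k \<in> {1..m} \<and> k \<noteq> j \<and> Neg (R k) \<notin> F}
                              \<union> {P i' k | k. k \<in> {1..m}} \<union> {P i'' k | k. k \<in> {1..m}}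
              \<and> real (deriv_size d) \<le> 9 * real m ^ 2"
    apply (rule exI[of _ "whole i i' i'' j F m"])
    using W unfolding SSeq by (elim conjE, intro conjI) assumption+
qed

end
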